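(* Let $F:\mathbb{R}\to\mathbb{R}$ be given by an everywhere convergent power series $F(u)=\sum_{k=0}^\infty a_k u^k$, let $\phi,\psi:\mathbb{R}\to\mathbb{R}$ be initial data, and let $(p_k)_{k\ge 0}$ be a probability distribution on $\{0,1,2,\dots\}$ with $p_0>0$, $p_k>0$ for every $k$ with $a_k\neq 0$, and $\sum_{k=1}^\infty k p_k\le 1$. Let $T>0$ and let $u:\mathbb{R}\times[0,T)\to\mathbb{R}$ be a mild solution of $u_{tt}-u_{xx}=F(u)$ on $[0,T)$ with initial data $\phi,\psi$. Fix $(x,t)\in\mathbb{R}\times(0,T)$, let $(\xi,\tau)$ be a random point uniformly distributed in $\Delta(x,t)$, and let $\kappa$ be a random variable with distribution $(p_k)$, independent of $(\xi,\tau)$. Then \[ u(x,t)=\mathsf{E}\left[\left(w(x,t)+\frac{t^2 b_0}{2}\right)\mathbf{1}_{\{\kappa=0\}}+\frac{t^2}{2}\,b_{\kappa}\,u^{\kappa}(\xi,\tau)\,\mathbf{1}_{\{\kappa\ge 1\}}\right]. \]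
   Context: For $(x,t)\in\mathbb{R}\times[0,\infty)$ let $\Delta(x,t)=\{(y,s):0\le s\le t,\ |y-x|\le t-s\}$ (a triangle of area $t^2$), and let \[ v(x,t)=\frac12\int_{x-t}^{x+t}\psi(y)\,dy+\frac12\big(\phi(x+t)+\phi(x-t)\big). \] A mild solution of $u_{tt}-u_{xx}=F(u)$ on $[0,T)$ with initial data $u(\cdot,0)=\phi$, $u_t(\cdot,0)=\psi$ is a measurable function $u:\mathbb{R}\times[0,T)\to\mathbb{R}$ such that for all $(x,t)\in\mathbb{R}\times[0,T)$, \[ u(x,t)=v(x,t)+\frac12\int_{\Delta(x,t)}F(u(y,s))\,dy\,ds. \] Define $w(x,t)=v(x,t)/p_0$, and for each $k\ge 0$ let $b_k=a_k/p_k$ if $p_k\neq 0$ and $b_k=0$ if $p_k=0$.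
   Formalization: The variable inside the expectation is assumed integrable, psi is integrable on every bounded interval, and a mild solution also has $F(u(y,s))$ Lebesgue integrable over every $\Delta(x,t)$. Apart from conventions, each condition added here is assumed in the paper as well or is needed for the statement above to hold. *)

theory Defs
  imports "HOL-Probability.Probability"
begin

definition tri :: "real \<Rightarrow> real \<Rightarrow> (real \<times> real) set" where
  "tri x t = {(y, s). 0 \<le> s \<and> s \<le> t \<and> \<bar>y - x\<bar> \<le> t - s}"

definition vfree :: "(real \<Rightarrow> real) \<Rightarrow> (real \<Rightarrow> real) \<Rightarrow> real \<Rightarrow> real \<Rightarrow> real" where
  "vfree phi psi x t =
     (1/2) * (LBINT y=x-t..x+t. psi y) + (1/2) * (phi (x + t) + phi (x - t))"

definition mild_solution ::
  "(real \<Rightarrow> real) \<Rightarrow> (real \<Rightarrow> real) \<Rightarrow> (real \<Rightarrow> real) \<Rightarrow> real \<Rightarrow> (real \<Rightarrow> real \<Rightarrow> real) \<Rightarrow> bool" where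
  "mild_solution F phi psi T u \<longleftrightarrow>
     (\<lambda>(y, s). u y s) \<in> borel_measurable (restrict_space lborel (UNIV \<times> {0..<T})) \<and>
     (\<forall>x t. 0 \<le> t \<and> t < T \<longrightarrow>
        set_integrable lborel (tri x t) (\<lambda>(y, s). F (u y s)) \<and>
        u x t = vfree phi psi x t + (1/2) * (\<integral>(y, s)\<in>tri x t. F (u y s) \<partial>lborel))"

end

theory Submission
  imports Defs
begin


lemma tri_sets[measurable]: "tri x t \<in> sets lborel"
proof -
  have "tri x t = {z. 0 \<le> snd z \<and> snd z \<le> t \<and> \<bar>fst z - x\<bar> \<le> t - snd z}"
    by (auto simp: tri_def)
  moreover have "closed {z::real\<times>real. 0 \<le> snd z \<and> snd z \<le> t \<and> \<bar>fst z - x\<bar> \<le> t - snd z}"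
    by (intro closed_Collect_conj closed_Collect_le continuous_intros)
  ultimately show ?thesis by (simp add: borel_closed)
qed

lemma tent_integral:
  assumes "0 \<le> t"
  shows "((\<lambda>y::real. t - \<bar>y - x\<bar>) has_integral t\<^sup>2) {x-t..x+t}"
proof -
  have 1: "((\<lambda>y::real. t - \<bar>y - x\<bar>) has_integral (((t-x)*x + x^2/2) - ((t-x)*(x-t) + (x-t)^2/2))) {x-t..x}"
  proof (rule fundamental_theorem_of_calculus)
    show "x - t \<le> x" using assms by simp
    fix y assume y: "y \<in> {x-t..x}"
    have "((\<lambda>y. (t-x)*y + y^2/2) has_real_derivative (t - x + y)) (at y within {x-t..x})"
      by (auto intro!: derivative_eq_intros)
    moreover have "t - x + y = t - \<bar>y - x\<bar>" using y by auto
    ultimately show "((\<lambda>y. (t-x)*y + y^2/2) has_vector_derivative (t - \<bar>y - x\<bar>)) (at y within {x-t..x})"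
      by (simp add: has_real_derivative_iff_has_vector_derivative)
  qed
  have 2: "((\<lambda>y::real. t - \<bar>y - x\<bar>) has_integral (((t+x)*(x+t) - (x+t)^2/2) - ((t+x)*x - x^2/2))) {x..x+t}"
  proof (rule fundamental_theorem_of_calculus)
    show "x \<le> x + t" using assms by simp
    fix y assume y: "y \<in> {x..x+t}"
    have "((\<lambda>y. (t+x)*y - y^2/2) has_real_derivative (t + x - y)) (at y within {x..x+t})"
      by (auto intro!: derivative_eq_intros)
    moreover have "t + x - y = t - \<bar>y - x\<bar>" using y by auto
    ultimately show "((\<lambda>y. (t+x)*y - y^2/2) has_vector_derivative (t - \<bar>y - x\<bar>)) (at y within {x..x+t})"
      by (simp add: has_real_derivative_iff_has_vector_derivative)
  qed
  have "((\<lambda>y::real. t - \<bar>y - x\<bar>) has_integral (((t-x)*x + x^2/2) - ((t-x)*(x-t) + (x-t)^2/2)) + (((t+x)*(x+t) - (x+t)^2/2) - ((t+x)*x - x^2/2))) {x-t..x+t}"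
    by (rule has_integral_combine[OF _ _ 1 2]) (use assms in auto)
  moreover have "(((t-x)*x + x^2/2) - ((t-x)*(x-t) + (x-t)^2/2)) + (((t+x)*(x+t) - (x+t)^2/2) - ((t+x)*x - x^2/2)) = t\<^sup>2"
    by (simp add: power2_eq_square field_simps)
  ultimately show ?thesis by simp
qed

lemma tri_area:
  assumes "0 \<le> t"
  shows "emeasure lborel (tri x t) = ennreal (t\<^sup>2)"
proof -
  have "emeasure lborel (tri x t) = emeasure (lborel \<Otimes>\<^sub>M lborel) (tri x t)"
    by (simp add: lborel_prod)
  also have "\<dots> = (\<integral>\<^sup>+y. emeasure lborel (Pair y -` tri x t) \<partial>lborel)"
    by (rule lborel.emeasure_pair_measure_alt) (subst lborel_prod, rule tri_sets)
  also have "\<dots> = (\<integral>\<^sup>+y. ennreal (t - \<bar>y - x\<bar>) * indicator {x-t..x+t} y \<partial>lborel)"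
  proof (rule nn_integral_cong)
    fix y :: real
    have "Pair y -` tri x t = {0..t - \<bar>y - x\<bar>}" by (auto simp: tri_def)
    then show "emeasure lborel (Pair y -` tri x t) = ennreal (t - \<bar>y - x\<bar>) * indicator {x-t..x+t} y"
      by (auto simp: indicator_def ennreal_neg)
  qed
  also have "\<dots> = ennreal (t\<^sup>2)"
    by (rule nn_integral_has_integral_lebesgue'[OF _ tent_integral[OF assms]]) auto
  finally show ?thesis .
qed



lemma indep_transfer:
  fixes pt :: "'w \<Rightarrow> real \<times> real" and kappa :: "'w \<Rightarrow> nat"
  assumes P: "prob_space M"
    and pt[measurable]: "pt \<in> M \<rightarrow>\<^sub>M lborel"
    and ka[measurable]: "kappa \<in> M \<rightarrow>\<^sub>M count_space UNIV"
    and q: "0 \<le> q"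
    and ind: "\<And>A. A \<in> sets borel \<Longrightarrow> measure M {\<omega> \<in> space M. pt \<omega> \<in> A \<and> kappa \<omega> = k}
                = q * measure M {\<omega> \<in> space M. pt \<omega> \<in> A}"
  shows "distr (density M (\<lambda>\<omega>. ennreal (indicator {\<omega> \<in> space M. kappa \<omega> = k} \<omega>))) lborel pt
       = density (distr M lborel pt) (\<lambda>_. ennreal q)"
proof (rule measure_eqI)
  interpret prob_space M by fact
  have [measurable]: "pt \<in> borel_measurable M" using pt by simp
  show "sets (distr (density M (\<lambda>\<omega>. ennreal (indicator {\<omega> \<in> space M. kappa \<omega> = k} \<omega>))) lborel pt) =
    sets (density (distr M lborel pt) (\<lambda>_. ennreal q))" by simp
  fix A assume "A \<in> sets (distr (density M (\<lambda>\<omega>. ennreal (indicator {\<omega> \<in> space M. kappa \<omega> = k} \<omega>))) lborel pt)"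
  then have A[measurable]: "A \<in> sets lborel" by simp
  then have A'[measurable]: "A \<in> sets borel" by simp
  have "emeasure (distr (density M (\<lambda>\<omega>. ennreal (indicator {\<omega> \<in> space M. kappa \<omega> = k} \<omega>))) lborel pt) A
     = emeasure (density M (\<lambda>\<omega>. ennreal (indicator {\<omega> \<in> space M. kappa \<omega> = k} \<omega>))) (pt -` A \<inter> space M)"
    by (subst emeasure_distr) auto
  also have "\<dots> = (\<integral>\<^sup>+\<omega>. ennreal (indicator {\<omega> \<in> space M. kappa \<omega> = k} \<omega>) * indicator (pt -` A \<inter> space M) \<omega> \<partial>M)"
    by (subst emeasure_density) auto
  also have "\<dots> = (\<integral>\<^sup>+\<omega>. indicator {\<omega> \<in> space M. pt \<omega> \<in> A \<and> kappa \<omega> = k} \<omega> \<partial>M)"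
    by (intro nn_integral_cong) (auto simp: indicator_def)
  also have "\<dots> = emeasure M {\<omega> \<in> space M. pt \<omega> \<in> A \<and> kappa \<omega> = k}"
    by (subst nn_integral_indicator) auto
  also have "\<dots> = ennreal (q * measure M {\<omega> \<in> space M. pt \<omega> \<in> A})"
    using ind[of A] by (simp add: emeasure_eq_measure)
  also have "\<dots> = ennreal q * emeasure (distr M lborel pt) A"
    by (subst emeasure_distr) (auto simp: emeasure_eq_measure ennreal_mult q Int_def conj_commute)
  also have "\<dots> = emeasure (density (distr M lborel pt) (\<lambda>_. ennreal q)) A"
    by (subst emeasure_density_const) auto
  finally show "emeasure (distr (density M (\<lambda>\<omega>. ennreal (indicator {\<omega> \<in> space M. kappa \<omega> = k} \<omega>))) lborel pt) A =
    emeasure (density (distr M lborel pt) (\<lambda>_. ennreal q)) A" .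
qed

lemma indep_integral:
  fixes pt :: "'w \<Rightarrow> real \<times> real" and kappa :: "'w \<Rightarrow> nat" and f :: "real \<times> real \<Rightarrow> real"
  assumes P: "prob_space M"
    and pt[measurable]: "pt \<in> M \<rightarrow>\<^sub>M lborel"
    and ka[measurable]: "kappa \<in> M \<rightarrow>\<^sub>M count_space UNIV"
    and q: "0 \<le> q"
    and ind: "\<And>A. A \<in> sets borel \<Longrightarrow> measure M {\<omega> \<in> space M. pt \<omega> \<in> A \<and> kappa \<omega> = k}
                = q * measure M {\<omega> \<in> space M. pt \<omega> \<in> A}"
    and f[measurable]: "f \<in> borel_measurable lborel"
  shows "(\<integral>\<omega>. indicator {\<omega> \<in> space M. kappa \<omega> = k} \<omega> * f (pt \<omega>) \<partial>M) = q * (\<integral>z. f z \<partial>distr M lborel pt)"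
    and "(\<integral>\<^sup>+\<omega>. indicator {\<omega> \<in> space M. kappa \<omega> = k} \<omega> * ennreal \<bar>f (pt \<omega>)\<bar> \<partial>M) = ennreal q * (\<integral>\<^sup>+z. ennreal \<bar>f z\<bar> \<partial>distr M lborel pt)"
proof -
  note D = indep_transfer[OF assms(1-5)]
  have [measurable]: "pt \<in> borel_measurable M" using pt by simp
  have [measurable]: "f \<in> borel_measurable borel" using f by simp
  have ptN[measurable]: "pt \<in> density M (\<lambda>\<omega>. ennreal (indicator {\<omega> \<in> space M. kappa \<omega> = k} \<omega>)) \<rightarrow>\<^sub>M lborel"
    by (simp add: measurable_cong_sets[OF sets_density refl])
  have "(\<integral>\<omega>. indicator {\<omega> \<in> space M. kappa \<omega> = k} \<omega> * f (pt \<omega>) \<partial>M)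
     = (\<integral>\<omega>. f (pt \<omega>) \<partial>density M (\<lambda>\<omega>. ennreal (indicator {\<omega> \<in> space M. kappa \<omega> = k} \<omega>)))"
    by (subst integral_density) auto
  also have "\<dots> = (\<integral>z. f z \<partial>distr (density M (\<lambda>\<omega>. ennreal (indicator {\<omega> \<in> space M. kappa \<omega> = k} \<omega>))) lborel pt)"
    by (subst integral_distr) auto
  also have "\<dots> = (\<integral>z. f z \<partial>density (distr M lborel pt) (\<lambda>_. ennreal q))"
    by (simp add: D)
  also have "\<dots> = q * (\<integral>z. f z \<partial>distr M lborel pt)"
    by (subst integral_density) (auto simp: q)
  finally show "(\<integral>\<omega>. indicator {\<omega> \<in> space M. kappa \<omega> = k} \<omega> * f (pt \<omega>) \<partial>M) = q * (\<integral>z. f z \<partial>distr M lborel pt)" .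
  have "(\<integral>\<^sup>+\<omega>. indicator {\<omega> \<in> space M. kappa \<omega> = k} \<omega> * ennreal \<bar>f (pt \<omega>)\<bar> \<partial>M)
     = (\<integral>\<^sup>+\<omega>. ennreal \<bar>f (pt \<omega>)\<bar> \<partial>density M (\<lambda>\<omega>. ennreal (indicator {\<omega> \<in> space M. kappa \<omega> = k} \<omega>)))"
    by (subst nn_integral_density) (auto intro!: nn_integral_cong simp: indicator_def)
  also have "\<dots> = (\<integral>\<^sup>+z. ennreal \<bar>f z\<bar> \<partial>distr (density M (\<lambda>\<omega>. ennreal (indicator {\<omega> \<in> space M. kappa \<omega> = k} \<omega>))) lborel pt)"
    by (subst nn_integral_distr) auto
  also have "\<dots> = (\<integral>\<^sup>+z. ennreal \<bar>f z\<bar> \<partial>density (distr M lborel pt) (\<lambda>_. ennreal q))"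
    by (simp add: D)
  also have "\<dots> = ennreal q * (\<integral>\<^sup>+z. ennreal \<bar>f z\<bar> \<partial>distr M lborel pt)"
    by (subst nn_integral_density) (auto simp: nn_integral_cmult)
  finally show "(\<integral>\<^sup>+\<omega>. indicator {\<omega> \<in> space M. kappa \<omega> = k} \<omega> * ennreal \<bar>f (pt \<omega>)\<bar> \<partial>M) = ennreal q * (\<integral>\<^sup>+z. ennreal \<bar>f z\<bar> \<partial>distr M lborel pt)" .
qed



theorem lemma1:
  fixes F :: "real \<Rightarrow> real" and a p :: "nat \<Rightarrow> real"
    and phi psi :: "real \<Rightarrow> real" and T x t :: real
    and u :: "real \<Rightarrow> real \<Rightarrow> real"
    and M :: "'w measure" and xi tau :: "'w \<Rightarrow> real" and kappa :: "'w \<Rightarrow> nat"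
  assumes F_series: "\<And>z. (\<lambda>k. a k * z ^ k) sums F z"
    and psi_loc: "\<And>c d. set_integrable lborel {c..d} psi"
    and p_nonneg: "\<And>k. p k \<ge> 0"
    and p_sum: "p sums 1"
    and p0_pos: "p 0 > 0"
    and p_pos: "\<And>k. a k \<noteq> 0 \<Longrightarrow> p k > 0"
    and p_mean_summable: "summable (\<lambda>k. real k * p k)"
    and p_mean: "(\<Sum>k. real k * p k) \<le> 1"
    and T_pos: "T > 0"
    and mild: "mild_solution F phi psi T u"
    and t_pos: "0 < t" and t_lt: "t < T"
    and M_prob: "prob_space M"
    and pt_meas: "(\<lambda>\<omega>. (xi \<omega>, tau \<omega>)) \<in> borel_measurable M"
    and pt_unif: "distr M lborel (\<lambda>\<omega>. (xi \<omega>, tau \<omega>)) = uniform_measure lborel (tri x t)"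
    and kappa_meas: "kappa \<in> measurable M (count_space UNIV)"
    and kappa_dist: "\<And>k. measure M {\<omega> \<in> space M. kappa \<omega> = k} = p k"
    and indep: "\<And>A K. A \<in> sets (borel :: (real \<times> real) measure) \<Longrightarrow>
        measure M {\<omega> \<in> space M. (xi \<omega>, tau \<omega>) \<in> A \<and> kappa \<omega> \<in> K}
        = measure M {\<omega> \<in> space M. (xi \<omega>, tau \<omega>) \<in> A} * measure M {\<omega> \<in> space M. kappa \<omega> \<in> K}"
    and integ: "integrable M (\<lambda>\<omega>.
         (if kappa \<omega> = 0 then vfree phi psi x t / p 0 + t\<^sup>2 * (if p 0 \<noteq> 0 then a 0 / p 0 else 0) / 2 else 0)
       + (if kappa \<omega> \<ge> 1 then t\<^sup>2 / 2 * (if p (kappa \<omega>) \<noteq> 0 then a (kappa \<omega>) / p (kappa \<omega>) else 0)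
              * (u (xi \<omega>) (tau \<omega>)) ^ (kappa \<omega>) else 0))"
  shows "u x t = (\<integral>\<omega>.
         (if kappa \<omega> = 0 then vfree phi psi x t / p 0 + t\<^sup>2 * (if p 0 \<noteq> 0 then a 0 / p 0 else 0) / 2 else 0)
       + (if kappa \<omega> \<ge> 1 then t\<^sup>2 / 2 * (if p (kappa \<omega>) \<noteq> 0 then a (kappa \<omega>) / p (kappa \<omega>) else 0)
              * (u (xi \<omega>) (tau \<omega>)) ^ (kappa \<omega>) else 0) \<partial>M)"
  proof -
  interpret P: prob_space M by (rule M_prob)
  define pt where "pt = (\<lambda>\<omega>. (xi \<omega>, tau \<omega>))"
  have pt_b[measurable]: "pt \<in> borel_measurable M" using pt_meas by (simp add: pt_def)
  have pt_l: "pt \<in> M \<rightarrow>\<^sub>M lborel" using pt_b by simp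
  have ka[measurable]: "kappa \<in> M \<rightarrow>\<^sub>M count_space UNIV" by (rule kappa_meas)
  define U where "U = distr M lborel pt"
  have U_eq: "U = uniform_measure lborel (tri x t)" using pt_unif by (simp add: U_def pt_def)
  interpret U: prob_space U unfolding U_def by (rule P.prob_space_distr) (rule pt_l)
  have area: "emeasure lborel (tri x t) = ennreal (t\<^sup>2)" using t_pos by (intro tri_area) simp
  have t2: "t\<^sup>2 > 0" using t_pos by simp
  have tri_b[measurable]: "tri x t \<in> sets borel" using tri_sets[of x t] by simp
  define S where "S = (UNIV :: real set) \<times> {0..<T}"
  have S_sets[measurable]: "S \<in> sets borel" unfolding S_def by (intro borel_Times) auto
  define h where "h z = indicator S z * (case z of (y, s) \<Rightarrow> u y s)" for z :: "real \<times> real"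
  have h_m[measurable]: "h \<in> borel_measurable borel"
  proof -
    have "(\<lambda>(y, s). u y s) \<in> borel_measurable (restrict_space lborel S)"
      using mild unfolding mild_solution_def S_def by blast
    then have "(\<lambda>z. indicator S z *\<^sub>R (\<lambda>(y, s). u y s) z) \<in> borel_measurable lborel"
      by (subst (asm) borel_measurable_restrict_space_iff) auto
    then show ?thesis by (simp add: h_def[abs_def])
  qed
  have tri_S: "tri x t \<subseteq> S" using t_lt by (auto simp: tri_def S_def)
  have h_tri: "z \<in> tri x t \<Longrightarrow> h z = (case z of (y, s) \<Rightarrow> u y s)" for z
    using tri_S by (auto simp: h_def)
  define b where "b k = (if p k \<noteq> 0 then a k / p k else 0)" for k
  have pb: "p k * b k = a k" for k
    using p_pos[of k] by (cases "p k = 0") (auto simp: b_def)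
  define c0 where "c0 = vfree phi psi x t / p 0 + t\<^sup>2 * b 0 / 2"
  define G where "G \<omega> = (if kappa \<omega> = 0 then c0 else 0)
       + (if kappa \<omega> \<ge> 1 then t\<^sup>2 / 2 * b (kappa \<omega>) * (u (xi \<omega>) (tau \<omega>)) ^ (kappa \<omega>) else 0)" for \<omega>
  define G' where "G' \<omega> = (if kappa \<omega> = 0 then c0 else 0)
       + (if kappa \<omega> \<ge> 1 then t\<^sup>2 / 2 * b (kappa \<omega>) * (h (pt \<omega>)) ^ (kappa \<omega>) else 0)" for \<omega>
  have G'_m[measurable]: "G' \<in> borel_measurable M"
    unfolding G'_def by measurable
  have AE_tri: "AE \<omega> in M. pt \<omega> \<in> tri x t"
  proof -
    have "AE z in U. z \<in> tri x t"
      unfolding U_eq using area t2 by (subst AE_uniform_measure) auto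
    then show ?thesis unfolding U_def by (subst (asm) AE_distr_iff) (auto intro: pt_l)
  qed
  have AE_GG': "AE \<omega> in M. G \<omega> = G' \<omega>"
    using AE_tri by eventually_elim (auto simp: G_def G'_def h_tri pt_def)
  have G_int: "integrable M G" unfolding G_def[abs_def] b_def c0_def using integ by simp
  have G'_int: "integrable M G'"
    using G_int AE_GG' by (subst integrable_cong_AE[symmetric]) (auto simp: G_int borel_measurable_integrable[OF G_int])
  have EG: "integral\<^sup>L M G = integral\<^sup>L M G'"
    by (rule integral_cong_AE[OF borel_measurable_integrable[OF G_int] G'_m AE_GG'])
  define K where "K k = {\<omega> \<in> space M. kappa \<omega> = k}" for k
  have K_sets[measurable]: "K k \<in> sets M" for k unfolding K_def by measurable
  define f where "f k \<omega> = indicator (K k) \<omega> * G' \<omega>" for k \<omega>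
  have f_m[measurable]: "f k \<in> borel_measurable M" for k unfolding f_def by measurable
  have f_int: "integrable M (f k)" for k
    unfolding f_def using integrable_real_mult_indicator[OF K_sets G'_int]
    by (simp add: mult.commute)
  have f_single: "\<omega> \<in> space M \<Longrightarrow> f k \<omega> = (if k = kappa \<omega> then G' \<omega> else 0)" for k \<omega>
    by (auto simp: f_def K_def)
  have sum_abs_f: "summable (\<lambda>k. \<integral>\<omega>. norm (f k \<omega>) \<partial>M)"
  proof (rule summable_suminf_not_top)
    show "0 \<le> (\<integral>\<omega>. norm (f k \<omega>) \<partial>M)" for k by simp
    have "(\<Sum>k. ennreal (\<integral>\<omega>. norm (f k \<omega>) \<partial>M)) = (\<Sum>k. \<integral>\<^sup>+\<omega>. ennreal (norm (G' \<omega>)) * indicator (K k) \<omega> \<partial>M)"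
    proof (intro suminf_cong)
      fix k
      have "ennreal (\<integral>\<omega>. norm (f k \<omega>) \<partial>M) = (\<integral>\<^sup>+\<omega>. ennreal (norm (f k \<omega>)) \<partial>M)"
        by (rule nn_integral_eq_integral[symmetric]) (auto intro: f_int)
      also have "\<dots> = (\<integral>\<^sup>+\<omega>. ennreal (norm (G' \<omega>)) * indicator (K k) \<omega> \<partial>M)"
        by (intro nn_integral_cong) (auto simp: f_def indicator_def)
      finally show "ennreal (\<integral>\<omega>. norm (f k \<omega>) \<partial>M) = (\<integral>\<^sup>+\<omega>. ennreal (norm (G' \<omega>)) * indicator (K k) \<omega> \<partial>M)" .
    qed
    also have "\<dots> = (\<integral>\<^sup>+\<omega>\<in>(\<Union>k. K k). ennreal (norm (G' \<omega>)) \<partial>M)"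
      by (rule nn_integral_disjoint_family[symmetric]) (auto simp: disjoint_family_on_def K_def)
    also have "\<dots> = (\<integral>\<^sup>+\<omega>. ennreal (norm (G' \<omega>)) \<partial>M)"
      by (intro nn_integral_cong) (auto simp: K_def indicator_def)
    also have "\<dots> < \<infinity>" using G'_int by (simp add: integrable_iff_bounded)
    finally show "(\<Sum>k. ennreal (\<integral>\<omega>. norm (f k \<omega>) \<partial>M)) \<noteq> \<top>" by simp
  qed
  have sumsM: "(\<lambda>k. integral\<^sup>L M (f k)) sums integral\<^sup>L M G'"
  proof -
    have "(\<lambda>k. integral\<^sup>L M (f k)) sums (\<integral>\<omega>. (\<Sum>k. f k \<omega>) \<partial>M)"
    proof (rule sums_integral[OF f_int _ sum_abs_f])
      show "AE \<omega> in M. summable (\<lambda>k. norm (f k \<omega>))"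
      proof (intro AE_I2)
        fix \<omega> assume w: "\<omega> \<in> space M"
        have "(\<lambda>k. norm (f k \<omega>)) = (\<lambda>k. if k = kappa \<omega> then \<bar>G' \<omega>\<bar> else 0)"
          using w by (auto simp: f_single)
        then show "summable (\<lambda>k. norm (f k \<omega>))"
          using summable_single[of "kappa \<omega>" "\<lambda>_. \<bar>G' \<omega>\<bar>"] by simp
      qed
    qed
    also have "(\<integral>\<omega>. (\<Sum>k. f k \<omega>) \<partial>M) = integral\<^sup>L M G'"
    proof (rule Bochner_Integration.integral_cong[OF refl])
      fix \<omega> assume w: "\<omega> \<in> space M"
      have "(\<lambda>k. f k \<omega>) = (\<lambda>k. if k = kappa \<omega> then G' \<omega> else 0)"
        using w by (auto simp: f_single)
      then show "(\<Sum>k. f k \<omega>) = G' \<omega>"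
        using sums_unique[OF sums_single[of "kappa \<omega>" "\<lambda>_. G' \<omega>"]] by simp
    qed
    finally show ?thesis .
  qed
  have indep_k: "A \<in> sets borel \<Longrightarrow> measure M {\<omega> \<in> space M. pt \<omega> \<in> A \<and> kappa \<omega> = k}
      = p k * measure M {\<omega> \<in> space M. pt \<omega> \<in> A}" for A k
    using indep[of A "{k}"] kappa_dist[of k] by (simp add: pt_def mult.commute)
  have h_l[measurable]: "h \<in> borel_measurable lborel" using h_m by simp
  define g where "g k z = t\<^sup>2 / 2 * b k * h z ^ k" for k z
  have g_m[measurable]: "g k \<in> borel_measurable lborel" for k unfolding g_def by measurable
  have f_ge1: "f k = (\<lambda>\<omega>. indicator {\<omega> \<in> space M. kappa \<omega> = k} \<omega> * g k (pt \<omega>))" if "k \<ge> 1" for k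
    using that by (auto simp: fun_eq_iff f_def K_def G'_def g_def indicator_def)
  have f_0: "f 0 = (\<lambda>\<omega>. indicator {\<omega> \<in> space M. kappa \<omega> = 0} \<omega> * (\<lambda>_. c0) (pt \<omega>))"
    by (auto simp: fun_eq_iff f_def K_def G'_def indicator_def)
  define I where "I k = (\<integral>z. h z ^ k \<partial>U)" for k
  have int_f: "integral\<^sup>L M (f k) = (if k = 0 then p 0 * c0 else t\<^sup>2 / 2 * a k * I k)" for k
  proof (cases "k = 0")
    case True
    have "integral\<^sup>L M (f 0) = p 0 * (\<integral>z. c0 \<partial>U)"
      unfolding f_0 U_def
      by (rule indep_integral(1)[OF M_prob pt_l ka p_nonneg indep_k]) auto
    then show ?thesis using True by (simp add: U.prob_space)
  next
    case False
    then have k1: "k \<ge> 1" by simp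
    have "integral\<^sup>L M (f k) = p k * (\<integral>z. g k z \<partial>U)"
      unfolding f_ge1[OF k1] U_def
      by (intro indep_integral(1)[OF M_prob pt_l ka p_nonneg indep_k]) auto
    also have "\<dots> = t\<^sup>2 / 2 * (p k * b k) * I k"
      by (simp add: g_def I_def)
    finally show ?thesis using False by (simp add: pb)
  qed
  have nn_f: "(\<integral>\<^sup>+\<omega>. ennreal (norm (f k \<omega>)) \<partial>M) = ennreal (t\<^sup>2 / 2) * (\<integral>\<^sup>+z. ennreal (norm (a k * h z ^ k)) \<partial>U)"
    if "k \<ge> 1" for k
  proof -
    have "(\<integral>\<^sup>+\<omega>. ennreal (norm (f k \<omega>)) \<partial>M)
       = (\<integral>\<^sup>+\<omega>. indicator {\<omega> \<in> space M. kappa \<omega> = k} \<omega> * ennreal \<bar>g k (pt \<omega>)\<bar> \<partial>M)"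
      unfolding f_ge1[OF that] by (intro nn_integral_cong) (auto simp: indicator_def)
    also have "\<dots> = ennreal (p k) * (\<integral>\<^sup>+z. ennreal \<bar>g k z\<bar> \<partial>U)"
      unfolding U_def
      by (intro indep_integral(2)[OF M_prob pt_l ka p_nonneg indep_k]) auto
    also have "\<dots> = (\<integral>\<^sup>+z. ennreal (p k) * ennreal \<bar>g k z\<bar> \<partial>U)"
      by (rule nn_integral_cmult[symmetric]) (simp add: U_def)
    also have "\<dots> = (\<integral>\<^sup>+z. ennreal (t\<^sup>2 / 2) * ennreal (norm (a k * h z ^ k)) \<partial>U)"
    proof (intro nn_integral_cong)
      fix z
      have "p k * \<bar>g k z\<bar> = t\<^sup>2 / 2 * norm (a k * h z ^ k)"
        using p_nonneg[of k] pb[of k]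
        by (simp add: g_def abs_mult power_abs flip: pb[of k])
      then show "ennreal (p k) * ennreal \<bar>g k z\<bar> = ennreal (t\<^sup>2 / 2) * ennreal (norm (a k * h z ^ k))"
        using p_nonneg[of k] by (simp add: ennreal_mult[symmetric])
    qed
    also have "\<dots> = ennreal (t\<^sup>2 / 2) * (\<integral>\<^sup>+z. ennreal (norm (a k * h z ^ k)) \<partial>U)"
      by (rule nn_integral_cmult) (simp add: U_def)
    finally show ?thesis .
  qed
  define f' where "f' k z = a k * h z ^ k" for k z
  have f'_m[measurable]: "f' k \<in> borel_measurable U" for k
    unfolding f'_def U_def by measurable
  have f_fin: "(\<integral>\<^sup>+\<omega>. ennreal (norm (f k \<omega>)) \<partial>M) < \<infinity>" for k
    using f_int[of k] by (simp add: integrable_iff_bounded)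
  have f'_int: "integrable U (f' k)" for k
  proof (cases "k = 0")
    case True then show ?thesis by (simp add: f'_def[abs_def])
  next
    case False
    then have k1: "k \<ge> 1" by simp
    have "ennreal (t\<^sup>2 / 2) * (\<integral>\<^sup>+z. ennreal (norm (a k * h z ^ k)) \<partial>U) < \<infinity>"
      using f_fin[of k] nn_f[OF k1] by simp
    then have "(\<integral>\<^sup>+z. ennreal (norm (f' k z)) \<partial>U) < \<infinity>"
      using t2 by (auto simp: ennreal_mult_less_top f'_def top.not_eq_extremum)
    then show ?thesis by (intro integrableI_bounded) auto
  qed
  have abs_rel: "(\<integral>\<omega>. norm (f k \<omega>) \<partial>M) = t\<^sup>2 / 2 * (\<integral>z. norm (f' k z) \<partial>U)" if k1: "k \<ge> 1" for k
  proof -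
    have "ennreal (\<integral>\<omega>. norm (f k \<omega>) \<partial>M) = (\<integral>\<^sup>+\<omega>. ennreal (norm (f k \<omega>)) \<partial>M)"
      by (rule nn_integral_eq_integral[symmetric]) (auto intro: f_int)
    also have "\<dots> = ennreal (t\<^sup>2 / 2) * (\<integral>\<^sup>+z. ennreal (norm (f' k z)) \<partial>U)"
      using nn_f[OF k1] by (simp add: f'_def)
    also have "(\<integral>\<^sup>+z. ennreal (norm (f' k z)) \<partial>U) = ennreal (\<integral>z. norm (f' k z) \<partial>U)"
      by (rule nn_integral_eq_integral) (auto intro: f'_int)
    also have "ennreal (t\<^sup>2 / 2) * ennreal (\<integral>z. norm (f' k z) \<partial>U) = ennreal (t\<^sup>2 / 2 * (\<integral>z. norm (f' k z) \<partial>U))"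
      by (rule ennreal_mult[symmetric]) auto
    finally have "ennreal (\<integral>\<omega>. norm (f k \<omega>) \<partial>M) = ennreal (t\<^sup>2 / 2 * (\<integral>z. norm (f' k z) \<partial>U))" .
    then show ?thesis by (subst (asm) ennreal_inj) auto
  qed
  have sum_abs_f': "summable (\<lambda>k. \<integral>z. norm (f' k z) \<partial>U)"
  proof -
    have "summable (\<lambda>k. (2 / t\<^sup>2) * (\<integral>\<omega>. norm (f k \<omega>) \<partial>M))"
      by (rule summable_mult[OF sum_abs_f])
    moreover have "eventually (\<lambda>k. (2 / t\<^sup>2) * (\<integral>\<omega>. norm (f k \<omega>) \<partial>M) = (\<integral>z. norm (f' k z) \<partial>U)) sequentially"
    proof (intro eventually_sequentiallyI[of 1])
      fix k :: nat assume "1 \<le> k"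
      then show "(2 / t\<^sup>2) * (\<integral>\<omega>. norm (f k \<omega>) \<partial>M) = (\<integral>z. norm (f' k z) \<partial>U)"
        using abs_rel[of k] t2 by (simp add: field_simps)
    qed
    ultimately show ?thesis using summable_cong by metis
  qed
  have sumsU: "(\<lambda>k. a k * I k) sums (\<integral>z. F (h z) \<partial>U)"
  proof -
    have "(\<lambda>k. integral\<^sup>L U (f' k)) sums (\<integral>z. (\<Sum>k. f' k z) \<partial>U)"
    proof (rule sums_integral[OF f'_int _ sum_abs_f'])
      show "AE z in U. summable (\<lambda>k. norm (f' k z))"
      proof (intro AE_I2)
        fix z
        have "summable (\<lambda>k. a k * (\<bar>h z\<bar> + 1) ^ k)" using F_series sums_summable by blast
        then show "summable (\<lambda>k. norm (f' k z))" unfolding f'_def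
          by (rule powser_insidea) simp
      qed
    qed
    moreover have "(\<lambda>k. integral\<^sup>L U (f' k)) = (\<lambda>k. a k * I k)"
      by (simp add: f'_def[abs_def] I_def fun_eq_iff)
    moreover have "(\<lambda>z. \<Sum>k. f' k z) = (\<lambda>z. F (h z))"
      using F_series by (simp add: f'_def fun_eq_iff sums_unique[symmetric])
    ultimately show ?thesis by simp
  qed
  have F_eq: "F = (\<lambda>z. \<Sum>k. a k * z ^ k)"
    using F_series by (simp add: fun_eq_iff sums_unique)
  have F_m[measurable]: "F \<in> borel_measurable borel"
    unfolding F_eq by measurable
  define J where "J = (\<integral>z. F (h z) \<partial>U)"
  have sumsM': "(\<lambda>k. if k = 0 then p 0 * c0 else t\<^sup>2 / 2 * a k * I k) sums integral\<^sup>L M G'"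
    using sumsM by (simp add: int_f)
  have "(\<lambda>k. (if k = 0 then p 0 * c0 else t\<^sup>2 / 2 * a k * I k) - t\<^sup>2 / 2 * (a k * I k))
      sums (integral\<^sup>L M G' - t\<^sup>2 / 2 * J)"
    unfolding J_def by (intro sums_diff sumsM' sums_mult sumsU)
  moreover have "(\<lambda>k. (if k = 0 then p 0 * c0 else t\<^sup>2 / 2 * a k * I k) - t\<^sup>2 / 2 * (a k * I k))
      = (\<lambda>k. if k = 0 then p 0 * c0 - t\<^sup>2 / 2 * (a 0 * I 0) else 0)"
    by (auto simp: fun_eq_iff)
  ultimately have "(\<lambda>k. if k = 0 then p 0 * c0 - t\<^sup>2 / 2 * (a 0 * I 0) else 0) sums (integral\<^sup>L M G' - t\<^sup>2 / 2 * J)"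
    by simp
  moreover have "(\<lambda>k. if k = 0 then p 0 * c0 - t\<^sup>2 / 2 * (a 0 * I 0) else 0) sums (p 0 * c0 - t\<^sup>2 / 2 * (a 0 * I 0))"
    using sums_single[of 0 "\<lambda>_. p 0 * c0 - t\<^sup>2 / 2 * (a 0 * I 0)"] by simp
  ultimately have E1: "integral\<^sup>L M G' - t\<^sup>2 / 2 * J = p 0 * c0 - t\<^sup>2 / 2 * (a 0 * I 0)"
    using sums_unique2 by blast
  have I0: "I 0 = 1" by (simp add: I_def U.prob_space)
  have pc0: "p 0 * c0 = vfree phi psi x t + t\<^sup>2 / 2 * a 0"
    using p0_pos pb[of 0] by (simp add: c0_def field_simps)
  have E2: "integral\<^sup>L M G' = vfree phi psi x t + t\<^sup>2 / 2 * J"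
    using E1 I0 pc0 by simp
  have dv: "1 / ennreal (t\<^sup>2) = ennreal (1 / t\<^sup>2)"
    using divide_ennreal[of 1 "t\<^sup>2"] t2 by simp
  have U_dens: "U = density lborel (\<lambda>z. ennreal (indicator (tri x t) z / t\<^sup>2))"
    unfolding U_eq uniform_measure_def area
    by (intro density_cong) (auto simp: indicator_def dv)
  have "J = (\<integral>z. (indicator (tri x t) z / t\<^sup>2) *\<^sub>R F (h z) \<partial>lborel)"
    unfolding J_def U_dens
    by (subst integral_density) auto
  also have "\<dots> = (1 / t\<^sup>2) * (\<integral>z. indicator (tri x t) z *\<^sub>R (\<lambda>(y, s). F (u y s)) z \<partial>lborel)"
    by (subst integral_mult_right_zero[symmetric])
       (intro Bochner_Integration.integral_cong refl, auto simp: indicator_def h_tri)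
  also have "\<dots> = (1 / t\<^sup>2) * (\<integral>(y, s)\<in>tri x t. F (u y s) \<partial>lborel)"
    by (simp add: set_lebesgue_integral_def)
  finally have J_eq: "J = (1 / t\<^sup>2) * (\<integral>(y, s)\<in>tri x t. F (u y s) \<partial>lborel)" .
  have ux: "u x t = vfree phi psi x t + (1/2) * (\<integral>(y, s)\<in>tri x t. F (u y s) \<partial>lborel)"
    using mild t_pos t_lt unfolding mild_solution_def by auto
  have "u x t = integral\<^sup>L M G"
    using ux EG E2 J_eq t2 by (simp add: field_simps)
  then show ?thesis unfolding G_def[abs_def] b_def c0_def .
qed


end
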